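(* Let $X$ have a pdf $f$ satisfying Conditions (A) and (B) below. Then $$\lim_{\delta\to0}\Big[\mathrm{AoI}(S_{\mathrm z},Q_{\mathrm{uni}}^\delta,F_{\mathrm s})-\tfrac32 H[Q_{\mathrm{uni}}^\delta(X)]\Big]=0.$$
   Context: Let $X$ be a real random variable with pdf $f$. Condition (A): $f$ is continuous and differentiable, and its support is a bounded interval $I$. Condition (B): $\int_I f\log_2^2 f\,dx$ and $-\int_I f\log_2 f\,dx$ exist and are finite. The uniform quantizer $Q_{\mathrm{uni}}^\delta$ partitions $I$ into consecutive cells of length $\delta$. Let $p_i$ be the probability that $X$ lies in cell $i$, and $H[Q_{\mathrm{uni}}^\delta(X)]=-\sum_ip_i\log_2p_i$. The real-valued Shannon code $F_{\mathrm s}$ assigns length $l_i=-\log_2p_i$ to cell $i$, and $L=l_i$ when $X$ is in cell $i$. Under the zero-wait sampler, $\mathrm{AoI}(S_{\mathrm z},Q_{\mathrm{uni}}^\delta,F_{\mathrm s})=\frac{E[L^2]}{2E[L]}+E[L]$. *)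

theory Defs
  imports "HOL-Analysis.Analysis"
begin

text \<open>Uniform quantizer of step delta on the support interval I = [a,b]:
  cells [a + k delta, a + (k+1) delta) intersected with [a,b], k = 0 .. N-1,
  where N = ceiling((b-a)/delta) (the last cell may be shorter).\<close>

definition uni_ncells :: "real \<Rightarrow> real \<Rightarrow> real \<Rightarrow> nat" where
  "uni_ncells a b \<delta> = nat \<lceil>(b - a) / \<delta>\<rceil>"

definition uni_cell :: "real \<Rightarrow> real \<Rightarrow> real \<Rightarrow> nat \<Rightarrow> real set" where
  "uni_cell a b \<delta> k = {a + real k * \<delta> ..< a + real (Suc k) * \<delta>} \<inter> {a..b}"

definition cell_prob :: "(real \<Rightarrow> real) \<Rightarrow> real \<Rightarrow> real \<Rightarrow> real \<Rightarrow> nat \<Rightarrow> real" where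
  "cell_prob f a b \<delta> k = integral (uni_cell a b \<delta> k) f"

definition quant_entropy :: "(real \<Rightarrow> real) \<Rightarrow> real \<Rightarrow> real \<Rightarrow> real \<Rightarrow> real" where
  "quant_entropy f a b \<delta> =
     - (\<Sum>k<uni_ncells a b \<delta>. cell_prob f a b \<delta> k * log 2 (cell_prob f a b \<delta> k))"

text \<open>Real-valued Shannon code: l_i = - log2 p_i; L = l_i when X lies in cell i.\<close>
definition shannon_len :: "(real \<Rightarrow> real) \<Rightarrow> real \<Rightarrow> real \<Rightarrow> real \<Rightarrow> nat \<Rightarrow> real" where
  "shannon_len f a b \<delta> k = - log 2 (cell_prob f a b \<delta> k)"

definition EL :: "(real \<Rightarrow> real) \<Rightarrow> real \<Rightarrow> real \<Rightarrow> real \<Rightarrow> real" where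
  "EL f a b \<delta> = (\<Sum>k<uni_ncells a b \<delta>. cell_prob f a b \<delta> k * shannon_len f a b \<delta> k)"

definition EL2 :: "(real \<Rightarrow> real) \<Rightarrow> real \<Rightarrow> real \<Rightarrow> real \<Rightarrow> real" where
  "EL2 f a b \<delta> = (\<Sum>k<uni_ncells a b \<delta>. cell_prob f a b \<delta> k * (shannon_len f a b \<delta> k)\<^sup>2)"

text \<open>AoI under the zero-wait sampler: E[L^2]/(2 E[L]) + E[L].\<close>
definition AoI_zw_uni_shannon :: "(real \<Rightarrow> real) \<Rightarrow> real \<Rightarrow> real \<Rightarrow> real \<Rightarrow> real" where
  "AoI_zw_uni_shannon f a b \<delta> = EL2 f a b \<delta> / (2 * EL f a b \<delta>) + EL f a b \<delta>"

end

theory Submission imports Defs begin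

lemma ln_sq_bound:
  fixes q :: real assumes q: "q > 0"
  shows "q * (ln q)^2 \<le> 8 + 2 * q^3"
proof -
  have s: "sqrt q > 0" using q by simp
  have u: "ln q \<le> q" using ln_le_minus_one[OF q] by linarith
  have "ln (1 / sqrt q) \<le> 1 / sqrt q - 1" using ln_le_minus_one[of "1 / sqrt q"] s by simp
  moreover have "ln (1 / sqrt q) = - ln q / 2"
    using q s by (simp add: ln_div ln_sqrt)
  ultimately have l: "- ln q \<le> 2 / sqrt q" by (simp add: field_simps)
  have pos: "2 / sqrt q > 0" using s by simp
  have "\<bar>ln q\<bar> \<le> 2 / sqrt q + q" unfolding abs_le_iff using u l pos q by linarith
  hence "(ln q)^2 \<le> (2 / sqrt q + q)^2"
    by (metis abs_ge_zero power2_abs power_mono)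
  also have "\<dots> \<le> 2 * (2 / sqrt q)^2 + 2 * q^2"
    by (smt (verit) sum_squares_bound power2_sum)
  also have "(2 / sqrt q)^2 = 4 / q" using q by (simp add: power_divide)
  finally have "(ln q)^2 \<le> 8 / q + 2 * q^2" by simp
  hence "q * (ln q)^2 \<le> q * (8 / q + 2 * q^2)" using q by (simp add: mult_left_mono)
  also have "\<dots> = 8 + 2 * q^3" using q by (simp add: field_simps power2_eq_square power3_eq_cube)
  finally show ?thesis .
qed

lemma var_ident:
  fixes p L :: "nat \<Rightarrow> real"
  shows "(\<Sum>k<N. p k * (L k - c)^2) = (\<Sum>k<N. p k * (L k)^2) - 2 * c * (\<Sum>k<N. p k * L k) + c^2 * (\<Sum>k<N. p k)"
  by (simp add: power2_diff algebra_simps sum.distrib sum_subtractf sum_distrib_left sum_distrib_right)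

lemma abstract_bounds:
  fixes p :: "nat \<Rightarrow> real" and N :: nat and M \<delta> C :: real
  assumes p0: "\<And>k. k < N \<Longrightarrow> 0 \<le> p k" and pM: "\<And>k. k < N \<Longrightarrow> p k \<le> M * \<delta>"
    and S: "(\<Sum>k<N. p k) = 1" and d: "0 < \<delta>" and M: "M > 0" and Nd: "real N * \<delta> \<le> C"
  shows "- (\<Sum>k<N. p k * log 2 (p k)) \<ge> - log 2 (M * \<delta>)"
    and "0 \<le> (\<Sum>k<N. p k * (- log 2 (p k))^2) - (\<Sum>k<N. p k * (- log 2 (p k)))^2"
    and "(\<Sum>k<N. p k * (- log 2 (p k))^2) - (\<Sum>k<N. p k * (- log 2 (p k)))^2
           \<le> C * ((8 + 2 * M^3) / (ln 2)^2)"
proof -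
  define L where "L k = - log 2 (p k)" for k
  define H where "H = (\<Sum>k<N. p k * L k)"
  define E2 where "E2 = (\<Sum>k<N. p k * (L k)^2)"
  have "(\<Sum>k<N. p k * (- log 2 (M * \<delta>))) \<le> (\<Sum>k<N. p k * L k)"
  proof (rule sum_mono)
    fix k assume "k \<in> {..<N}"
    hence k: "k < N" by simp
    show "p k * (- log 2 (M * \<delta>)) \<le> p k * L k"
    proof (cases "p k = 0")
      case True then show ?thesis by simp
    next
      case False
      hence pp: "p k > 0" using p0[OF k] by simp
      have "log 2 (p k) \<le> log 2 (M * \<delta>)" using pp pM[OF k] by simp
      thus ?thesis unfolding L_def using pp by (intro mult_left_mono) auto
    qed
  qed
  moreover have "(\<Sum>k<N. p k * (- log 2 (M * \<delta>))) = - log 2 (M * \<delta>)"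
    by (metis S mult_1 sum_distrib_right)
  ultimately have "- log 2 (M * \<delta>) \<le> H" unfolding H_def by simp
  thus "- (\<Sum>k<N. p k * log 2 (p k)) \<ge> - log 2 (M * \<delta>)"
    unfolding H_def L_def by (simp add: sum_negf)
  have vi: "\<And>c. (\<Sum>k<N. p k * (L k - c)^2) = E2 - 2 * c * H + c^2"
    unfolding E2_def H_def using var_ident[of p L _ N] S by simp
  have "0 \<le> (\<Sum>k<N. p k * (L k - H)^2)" using p0 by (intro sum_nonneg) auto
  hence "0 \<le> E2 - H^2" using vi[of H] by (simp add: power2_eq_square)
  thus "0 \<le> (\<Sum>k<N. p k * (- log 2 (p k))^2) - (\<Sum>k<N. p k * (- log 2 (p k)))^2"
    unfolding E2_def H_def L_def .
  define c where "c = - log 2 \<delta>"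
  define K where "K = (8 + 2 * M^3) / (ln 2)^2"
  have K0: "K \<ge> 0" using M unfolding K_def by (intro divide_nonneg_nonneg) auto
  have "(\<Sum>k<N. p k * (L k - c)^2) \<le> (\<Sum>k<N. \<delta> * K)"
  proof (rule sum_mono)
    fix k assume "k \<in> {..<N}"
    hence k: "k < N" by simp
    show "p k * (L k - c)^2 \<le> \<delta> * K"
    proof (cases "p k = 0")
      case True then show ?thesis using d K0 by simp
    next
      case False
      hence pp: "p k > 0" using p0[OF k] by simp
      define q where "q = p k / \<delta>"
      have q: "q > 0" "q \<le> M" using pp d pM[OF k] by (auto simp: q_def field_simps)
      have "L k - c = - (ln q / ln 2)"
        using pp d by (simp add: L_def c_def q_def log_def ln_div diff_divide_distrib)
      hence "p k * (L k - c)^2 = \<delta> * (q * (ln q)^2) / (ln 2)^2"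
        using d by (simp add: q_def power_divide)
      also have "\<dots> \<le> \<delta> * (8 + 2 * q^3) / (ln 2)^2"
        using ln_sq_bound[OF q(1)] d by (intro divide_right_mono mult_left_mono) auto
      also have "\<dots> \<le> \<delta> * (8 + 2 * M^3) / (ln 2)^2"
        using q d by (intro divide_right_mono mult_left_mono) (auto intro: power_mono)
      finally show ?thesis by (simp add: K_def)
    qed
  qed
  also have "\<dots> = real N * \<delta> * K" by simp
  also have "\<dots> \<le> C * K" using Nd K0 by (intro mult_right_mono) auto
  finally have "E2 - 2 * c * H + c^2 \<le> C * K" using vi[of c] by simp
  moreover have "E2 - H^2 \<le> E2 - 2 * c * H + c^2"
    using sum_squares_ge_zero[of "H - c" 0] by (simp add: power2_eq_square algebra_simps)
  ultimately show "(\<Sum>k<N. p k * (- log 2 (p k))^2) - (\<Sum>k<N. p k * (- log 2 (p k)))^2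
           \<le> C * ((8 + 2 * M^3) / (ln 2)^2)"
    unfolding E2_def H_def L_def K_def by linarith
qed

lemma cell_has_int:
  fixes f :: "real \<Rightarrow> real"
  assumes fi: "f integrable_on {a..b}" and lo: "a \<le> lo" "lo \<le> b" and d: "0 < \<delta>"
  shows "(f has_integral integral {lo..min (lo+\<delta>) b} f) ({lo..<lo+\<delta>} \<inter> {a..b})"
proof -
  have "f integrable_on {lo..min (lo+\<delta>) b}"
    using fi lo by (intro integrable_on_subinterval[OF fi]) auto
  hence h: "(f has_integral integral {lo..min (lo+\<delta>) b} f) {lo..min (lo+\<delta>) b}"
    by (simp add: integrable_integral)
  show ?thesis
  proof (rule iffD1[OF has_integral_spike_set_eq h])
    show "negligible {x \<in> {lo..min (lo + \<delta>) b} - {lo..<lo + \<delta>} \<inter> {a..b}. f x \<noteq> 0}"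
      by (rule negligible_subset[of "{min (lo+\<delta>) b}"]) (use lo in auto)
    show "negligible {x \<in> {lo..<lo + \<delta>} \<inter> {a..b} - {lo..min (lo + \<delta>) b}. f x \<noteq> 0}"
      by (rule negligible_subset[of "{}"]) auto
  qed
qed

lemma log_to_top:
  fixes M :: real assumes M: "M > 0"
  shows "filterlim (\<lambda>d. 2 * (- log 2 (M * d))) at_top (at_right 0)"
proof -
  have 2: "filterlim (\<lambda>d. ln M + ln d) at_bot (at_right 0)"
    by (rule filterlim_tendsto_add_at_bot_iff[OF tendsto_const, THEN iffD2, OF ln_at_0])
  have 3: "filterlim (\<lambda>d. - (ln M + ln d)) at_top (at_right 0)"
    by (subst filterlim_uminus_at_top) (simp only: minus_minus 2)
  have 4: "filterlim (\<lambda>d. (2 / ln 2) * - (ln M + ln d)) at_top (at_right 0)"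
    by (rule filterlim_tendsto_pos_mult_at_top[OF tendsto_const _ 3]) simp
  have pt: "(2 / ln 2) * - (ln M + ln d) = 2 * (- log 2 (M * d))" if d: "d > 0" for d
  proof -
    have "log 2 (M * d) = (ln M + ln d) / ln 2" unfolding log_def using M d by (simp add: ln_mult)
    moreover have "(2 / c) * - x = 2 * (- (x / c))" for x c :: real
      by simp
    hence "(2 / ln 2) * - (ln M + ln d) = 2 * (- ((ln M + ln d) / ln 2))" .
    ultimately show ?thesis by (simp only:)
  qed
  have ev: "eventually (\<lambda>d. (2 / ln 2) * - (ln M + ln d) = 2 * (- log 2 (M * d))) (at_right 0)"
    using eventually_at_right_real[of "0::real" 1, OF zero_less_one]
    by (rule eventually_mono) (rule pt, simp)
  show ?thesis by (rule filterlim_cong[THEN iffD1, OF refl refl ev 4])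
qed

theorem lemma3:
  fixes f :: "real \<Rightarrow> real" and a b :: real
  assumes ab: "a < b"
    and pdf_nonneg: "\<And>x. f x \<ge> 0"
    and pdf_int: "(f has_integral 1) {a..b}"
    and supp_out: "\<And>x. x \<notin> {a..b} \<Longrightarrow> f x = 0"
    and supp: "closure {x. f x > 0} = {a..b}"
    and A_cont: "continuous_on {a..b} f"
    and A_diff: "f differentiable_on {a..b}"
    and B1: "(\<lambda>x. f x * (log 2 (f x))\<^sup>2) integrable_on {a..b}"
    and B2: "(\<lambda>x. f x * log 2 (f x)) integrable_on {a..b}"
  shows "((\<lambda>\<delta>. AoI_zw_uni_shannon f a b \<delta> - 3/2 * quant_entropy f a b \<delta>)
           \<longlongrightarrow> 0) (at_right 0)"
proof -
  have fi: "f integrable_on {a..b}" using pdf_int by blast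
  obtain x0 where "x0 \<in> {a..b}" and x0: "\<forall>y\<in>{a..b}. f y \<le> f x0"
    using continuous_attains_sup[OF compact_Icc _ A_cont] ab by auto
  define M where "M = max (f x0) 1"
  have M: "M > 0" "M \<ge> 1" unfolding M_def by auto
  have fM: "\<And>y. y \<in> {a..b} \<Longrightarrow> f y \<le> M" using x0 unfolding M_def by force
  define C where "C = b - a + 1"
  define K where "K = C * ((8 + 2 * M^3) / (ln 2)^2)"
  define g where "g \<delta> = AoI_zw_uni_shannon f a b \<delta> - 3/2 * quant_entropy f a b \<delta>" for \<delta>
  have key: "0 \<le> g \<delta> \<and> g \<delta> \<le> K / (2 * (- log 2 (M * \<delta>)))"
    if d: "0 < \<delta>" "\<delta> < 1 / (2 * M)" for \<delta>
  proof -
    define N where "N = uni_ncells a b \<delta>"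
    define p where "p = cell_prob f a b \<delta>"
    have Md: "M * \<delta> < 1/2" using d M by (simp add: field_simps)
    have "\<delta> \<le> M * \<delta>" using M d by simp
    hence d1: "\<delta> < 1" using Md by linarith
    define y where "y = (b - a) / \<delta>"
    have y0: "y > 0" using ab d by (simp add: y_def)
    have Ny: "real N = of_int \<lceil>y\<rceil>" unfolding N_def uni_ncells_def y_def[symmetric]
      using y0 by simp
    have Nreal: "real N * \<delta> \<le> C"
    proof -
      have "real N < y + 1" using Ny ceiling_correct[of y] by linarith
      hence "real N * \<delta> < (y + 1) * \<delta>" using d by (intro mult_strict_right_mono) auto
      also have "(y + 1) * \<delta> = b - a + \<delta>" using d by (simp add: y_def field_simps)
      finally show ?thesis using d1 unfolding C_def by linarith
    qed
    have klo: "a + real k * \<delta> < b" if k: "k < N" for k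
    proof -
      have "int k < \<lceil>y\<rceil>" using k unfolding N_def uni_ncells_def y_def by linarith
      hence "real k < y" using less_ceiling_iff[of "int k" y] by simp
      hence "real k * \<delta> < y * \<delta>" using d by (intro mult_strict_right_mono) auto
      thus ?thesis using d by (simp add: y_def)
    qed
    have pint: "(f has_integral p k) (uni_cell a b \<delta> k)"
      and pval: "p k = integral {a + real k * \<delta>..min (a + real k * \<delta> + \<delta>) b} f"
      if k: "k < N" for k
    proof -
      have h: "(f has_integral integral {a + real k * \<delta>..min (a + real k * \<delta> + \<delta>) b} f)
            ({a + real k * \<delta>..<a + real k * \<delta> + \<delta>} \<inter> {a..b})"
        using klo[OF k] d by (intro cell_has_int[OF fi]) auto
      have cell: "uni_cell a b \<delta> k = {a + real k * \<delta>..<a + real k * \<delta> + \<delta>} \<inter> {a..b}"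
        unfolding uni_cell_def by (simp add: algebra_simps)
      show "p k = integral {a + real k * \<delta>..min (a + real k * \<delta> + \<delta>) b} f"
        unfolding p_def cell_prob_def cell using h by (simp add: integral_unique)
      thus "(f has_integral p k) (uni_cell a b \<delta> k)" using h cell by simp
    qed
    have p0: "0 \<le> p k" and pM: "p k \<le> M * \<delta>" if k: "k < N" for k
    proof -
      let ?lo = "a + real k * \<delta>" and ?hi = "min (a + real k * \<delta> + \<delta>) b"
      have "a \<le> ?lo" using d by simp
      have sub: "{?lo..?hi} \<subseteq> {a..b}" using d by auto
      have fMs: "\<And>x. x \<in> {?lo..?hi} \<Longrightarrow> f x \<le> M" using sub fM by blast
      have fi2: "f integrable_on {?lo..?hi}" by (rule integrable_on_subinterval[OF fi sub])
      show "0 \<le> p k" unfolding pval[OF k] using fi2 pdf_nonneg by (intro integral_nonneg) auto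
      have "p k \<le> integral {?lo..?hi} (\<lambda>_. M)" unfolding pval[OF k]
        using fi2 fMs by (intro integral_le) auto
      also have "\<dots> = M * (?hi - ?lo)" using klo[OF k] d by simp
      also have "\<dots> \<le> M * \<delta>" using M by (intro mult_left_mono) auto
      finally show "p k \<le> M * \<delta>" .
    qed
    have S: "(\<Sum>k<N. p k) = 1"
    proof -
      let ?U = "\<Union>k\<in>{..<N}. uni_cell a b \<delta> k"
      have "(f has_integral (\<Sum>k<N. p k)) ?U"
      proof (rule has_integral_UN)
        show "pairwise (\<lambda>i j. negligible (uni_cell a b \<delta> i \<inter> uni_cell a b \<delta> j)) {..<N}"
        proof (rule pairwiseI)
          fix i j assume "i \<in> {..<N}" "j \<in> {..<N}" "i \<noteq> j"
          have "uni_cell a b \<delta> i \<inter> uni_cell a b \<delta> j = {}"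
          proof (rule ccontr)
            assume "uni_cell a b \<delta> i \<inter> uni_cell a b \<delta> j \<noteq> {}"
            then obtain x where xi: "a + real i * \<delta> \<le> x" "x < a + real (Suc i) * \<delta>"
              and xj: "a + real j * \<delta> \<le> x" "x < a + real (Suc j) * \<delta>"
              unfolding uni_cell_def by auto
            show False
            proof (cases "i < j")
              case True
              hence "real (Suc i) * \<delta> \<le> real j * \<delta>" using d by (intro mult_right_mono) auto
              thus False using xi xj by linarith
            next
              case False
              hence "j < i" using \<open>i \<noteq> j\<close> by simp
              hence "real (Suc j) * \<delta> \<le> real i * \<delta>" using d by (intro mult_right_mono) auto
              thus False using xi xj by linarith
            qed
          qed
          thus "negligible (uni_cell a b \<delta> i \<inter> uni_cell a b \<delta> j)" by simp
        qed
      qed (simp_all add: pint)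
      moreover have "(f has_integral 1) ?U"
      proof (rule iffD1[OF has_integral_spike_set_eq pdf_int])
        have "{a..<b} \<subseteq> ?U"
        proof
          fix x assume x: "x \<in> {a..<b}"
          define z where "z = (x - a) / \<delta>"
          have z0: "z \<ge> 0" using x d by (simp add: z_def)
          define k where "k = nat \<lfloor>z\<rfloor>"
          have rk: "real k = of_int \<lfloor>z\<rfloor>" using z0 by (simp add: k_def)
          have kz: "real k \<le> z" "z < real k + 1" using rk floor_correct[of z] by auto
          have "z < y" using x d by (simp add: z_def y_def divide_strict_right_mono)
          hence "\<lfloor>z\<rfloor> < \<lceil>y\<rceil>" using kz rk ceiling_correct[of y] by linarith
          hence kN: "k < N" unfolding N_def uni_ncells_def y_def[symmetric] k_def using z0 by linarith
          have "real k * \<delta> \<le> z * \<delta>" "z * \<delta> < (real k + 1) * \<delta>"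
            using kz d by (auto intro: mult_right_mono mult_strict_right_mono)
          moreover have "z * \<delta> = x - a" using d by (simp add: z_def)
          ultimately have "x \<in> uni_cell a b \<delta> k" using x unfolding uni_cell_def
            by (auto simp: algebra_simps)
          thus "x \<in> ?U" using kN by auto
        qed
        moreover have "?U \<subseteq> {a..b}" unfolding uni_cell_def by auto
        ultimately have U1: "{a..<b} \<subseteq> ?U" and U2: "?U \<subseteq> {a..b}" by auto
        have "{x \<in> {a..b} - ?U. f x \<noteq> 0} \<subseteq> {b}"
        proof
          fix x assume "x \<in> {x \<in> {a..b} - ?U. f x \<noteq> 0}"
          hence "x \<in> {a..b}" "x \<notin> ?U" by auto
          thus "x \<in> {b}" using U1 by (cases "x < b") auto
        qed
        thus "negligible {x \<in> {a..b} - ?U. f x \<noteq> 0}" by (rule negligible_subset[rotated]) simp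
        have "{x \<in> ?U - {a..b}. f x \<noteq> 0} = {}" using U2 by blast
        thus "negligible {x \<in> ?U - {a..b}. f x \<noteq> 0}" by (simp only: negligible_empty)
      qed
      ultimately show ?thesis by (rule has_integral_unique)
    qed
    note AB = abstract_bounds[OF p0 pM S d(1) M(1) Nreal]
    define Hs where "Hs = (\<Sum>k<N. p k * (- log 2 (p k)))"
    define E2 where "E2 = (\<Sum>k<N. p k * (- log 2 (p k))^2)"
    have EL: "EL f a b \<delta> = Hs" unfolding EL_def Hs_def shannon_len_def N_def p_def ..
    have EL2: "EL2 f a b \<delta> = E2" unfolding EL2_def E2_def shannon_len_def N_def p_def ..
    have QE: "quant_entropy f a b \<delta> = Hs" unfolding quant_entropy_def Hs_def N_def p_def
      by (simp add: sum_negf)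
    have Hlow: "- log 2 (M * \<delta>) \<le> Hs" using AB(1) unfolding Hs_def by (simp add: sum_negf)
    have lpos: "0 < - log 2 (M * \<delta>)" using Md M d by simp
    have Hpos: "Hs > 0" using Hlow lpos by linarith
    have gv: "g \<delta> = (E2 - Hs^2) / (2 * Hs)"
    proof -
      have "g \<delta> = E2 / (2 * Hs) + Hs - 3/2 * Hs"
        unfolding g_def AoI_zw_uni_shannon_def EL EL2 QE by simp
      also have "\<dots> = (E2 - Hs^2) / (2 * Hs)"
        using Hpos by (simp add: diff_divide_distrib power2_eq_square)
      finally show ?thesis .
    qed
    have V0: "0 \<le> E2 - Hs^2" using AB(2) unfolding E2_def Hs_def .
    have VK: "E2 - Hs^2 \<le> K" using AB(3) unfolding E2_def Hs_def K_def .
    have "0 \<le> g \<delta>" unfolding gv using V0 Hpos by simp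
    moreover have "g \<delta> \<le> K / (2 * Hs)" unfolding gv using VK Hpos by (intro divide_right_mono) auto
    moreover have "K / (2 * Hs) \<le> K / (2 * (- log 2 (M * \<delta>)))"
    proof (rule divide_left_mono)
      show "0 \<le> K" using V0 VK by linarith
      show "2 * (- log 2 (M * \<delta>)) \<le> 2 * Hs" using Hlow by linarith
      show "0 < 2 * Hs * (2 * (- log 2 (M * \<delta>)))" using Hpos lpos by (intro mult_pos_pos) auto
    qed
    ultimately show ?thesis by linarith
  qed
  have ev: "eventually (\<lambda>\<delta>. 0 < \<delta> \<and> \<delta> < 1 / (2 * M)) (at_right 0)"
    using eventually_at_right_real[of "0::real" "1 / (2 * M)"] M by simp
  have lim: "((\<lambda>\<delta>. K / (2 * (- log 2 (M * \<delta>)))) \<longlongrightarrow> 0) (at_right 0)"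
    by (rule tendsto_divide_0[OF tendsto_const filterlim_at_top_imp_at_infinity[OF log_to_top[OF M(1)]]])
  have "(g \<longlongrightarrow> 0) (at_right 0)"
  proof (rule tendsto_sandwich[OF _ _ tendsto_const lim])
    show "eventually (\<lambda>\<delta>. 0 \<le> g \<delta>) (at_right 0)" using ev by eventually_elim (simp add: key)
    show "eventually (\<lambda>\<delta>. g \<delta> \<le> K / (2 * (- log 2 (M * \<delta>)))) (at_right 0)"
      using ev by eventually_elim (use key in blast)
  qed
  thus ?thesis unfolding g_def .
qed

end
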